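(* Let $f:\mathbb{R}^d\to\mathbb{R}$ be convex and differentiable, and suppose that $\nabla^2f(\boldsymbol x)\preceq L\boldsymbol I$ for all $\boldsymbol x\in B(\boldsymbol x_0,M)$, for some $\boldsymbol x_0\in\mathbb{R}^d$, $0<M\le+\infty$ and $0<L<+\infty$. If $\lambda>\|\nabla f(\boldsymbol x_0)\|_2$, then for all $\boldsymbol x\in B\big(\boldsymbol x_0,\min\{(\lambda-\|\nabla f(\boldsymbol x_0)\|_2)/L,M\}\big)$, $$f(\boldsymbol x)=\inf_{\boldsymbol y\in\mathbb{R}^d}\{f(\boldsymbol y)+\lambda\|\boldsymbol x-\boldsymbol y\|_2\}\qquad\text{and}\qquad\mathop{\mathrm{argmin}}_{\boldsymbol y\in\mathbb{R}^d}\{f(\boldsymbol y)+\lambda\|\boldsymbol x-\boldsymbol y\|_2\}=\{\boldsymbol x\}.$$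
   Context: $B(\boldsymbol x,r)$ is the closed Euclidean ball; $f$ is assumed twice differentiable on $B(\boldsymbol x_0,M)$ so that the Hessian bound makes sense. *)

theory Defs
  imports "HOL-Analysis.Analysis"
begin

end

theory Submission
  imports Defs
begin

lemma line_hd:
  fixes F :: "'a::real_normed_vector \<Rightarrow> 'b::real_normed_vector"
  assumes "(F has_derivative F') (at (a + t *\<^sub>R u))"
  shows "((\<lambda>s. F (a + s *\<^sub>R u)) has_derivative (\<lambda>h. F' (h *\<^sub>R u))) (at t)"
proof -
  have "((\<lambda>s. a + s *\<^sub>R u) has_derivative (\<lambda>h. h *\<^sub>R u)) (at t)"
    by (auto intro!: derivative_eq_intros)
  from has_derivative_compose[OF this assms] show ?thesis .
qed

lemma line_fd:
  fixes F :: "'a::real_inner \<Rightarrow> real"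
  assumes "(F has_derivative (\<lambda>h. c \<bullet> h)) (at (a + t *\<^sub>R u))"
  shows "((\<lambda>s. F (a + s *\<^sub>R u)) has_field_derivative (c \<bullet> u)) (at t)"
  using has_derivative_imp_has_field_derivative[OF line_hd[OF assms]]
  by (simp add: inner_scaleR_right)

lemma line_gd:
  fixes G :: "'a::real_inner \<Rightarrow> 'a"
  assumes "(G has_derivative G') (at (a + t *\<^sub>R u))"
  shows "((\<lambda>s. e \<bullet> G (a + s *\<^sub>R u)) has_field_derivative (e \<bullet> G' u)) (at t)"
proof -
  have l: "linear G'" using assms has_derivative_linear by blast
  have "((\<lambda>s. e \<bullet> G (a + s *\<^sub>R u)) has_derivative (\<lambda>h. e \<bullet> G' (h *\<^sub>R u))) (at t)"
    using line_hd[OF assms] by (auto intro!: derivative_eq_intros)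
  then show ?thesis
    by (rule has_derivative_imp_has_field_derivative) (simp add: linear_scale[OF l] inner_scaleR_right)
qed

lemma tangent:
  fixes f :: "'a::real_inner \<Rightarrow> real"
  assumes conv: "convex_on UNIV f"
    and grad: "\<And>x. (f has_derivative (\<lambda>h. g x \<bullet> h)) (at x)"
  shows "f y \<ge> f x + g x \<bullet> (y - x)"
proof (rule ccontr)
  assume nc: "\<not> ?thesis"
  define u where "u = y - x"
  define \<psi> where "\<psi> t = f (x + t *\<^sub>R u) - f x - t * (f y - f x)" for t
  have d: "(\<psi> has_field_derivative (g x \<bullet> u - (f y - f x))) (at 0)"
  proof -
    have d1: "((\<lambda>t. f (x + t *\<^sub>R u)) has_field_derivative g x \<bullet> u) (at 0)"
      using line_fd[of f "g x" x 0 u] grad by simp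
    have "((\<lambda>t. f (x + t *\<^sub>R u) - f x - t * (f y - f x)) has_field_derivative (g x \<bullet> u - 0 - 1 * (f y - f x))) (at 0)"
      by (intro DERIV_diff d1 DERIV_const DERIV_cmult_right DERIV_ident)
    then show ?thesis unfolding \<psi>_def by simp
  qed
  have "0 < g x \<bullet> u - (f y - f x)" using nc by (simp add: u_def)
  from DERIV_pos_inc_right[OF d this] obtain d where d: "d > 0" "\<And>h. h > 0 \<Longrightarrow> h < d \<Longrightarrow> \<psi> 0 < \<psi> (0 + h)"
    by blast
  define h where "h = min (d/2) 1"
  have h: "h > 0" "h < d" "h \<le> 1" using d by (auto simp: h_def)
  have "f ((1 - h) *\<^sub>R x + h *\<^sub>R y) \<le> (1 - h) * f x + h * f y"
    using convex_onD[OF conv, of h x y] h by simp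
  moreover have "(1 - h) *\<^sub>R x + h *\<^sub>R y = x + h *\<^sub>R u" by (simp add: u_def algebra_simps)
  ultimately have "\<psi> h \<le> 0" by (simp add: \<psi>_def algebra_simps)
  moreover have "\<psi> 0 = 0" by (simp add: \<psi>_def)
  ultimately show False using d(2)[OF h(1,2)] by simp
qed

lemma sym_aux:
  fixes f :: "'a::real_inner \<Rightarrow> real"
  assumes grad: "\<And>x. (f has_derivative (\<lambda>h. g x \<bullet> h)) (at x)"
    and R: "\<And>a. norm a < \<delta> \<Longrightarrow> norm (g (z + a) - g z - H a) \<le> \<epsilon> * norm a"
    and lin: "linear H" and ep: "\<epsilon> \<ge> 0"
    and s: "0 < s" "s * (norm v + norm w) < \<delta>"
  shows "\<bar>f (z + s *\<^sub>R v + s *\<^sub>R w) - f (z + s *\<^sub>R v) - f (z + s *\<^sub>R w) + f z - s\<^sup>2 * (H w \<bullet> v)\<bar>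
          \<le> \<epsilon> * s\<^sup>2 * ((2 * norm v + norm w) * norm v)"
proof -
  define \<psi> where "\<psi> t = f ((z + s *\<^sub>R w) + t *\<^sub>R v) - f (z + t *\<^sub>R v)" for t
  have der: "(\<psi> has_field_derivative (g ((z + s *\<^sub>R w) + t *\<^sub>R v) \<bullet> v - g (z + t *\<^sub>R v) \<bullet> v)) (at t)" for t
    unfolding \<psi>_def by (rule DERIV_diff; rule line_fd; rule grad)
  obtain \<xi> where xi: "0 < \<xi>" "\<xi> < s" and eq: "\<psi> s - \<psi> 0 = (s - 0) * (g ((z + s *\<^sub>R w) + \<xi> *\<^sub>R v) \<bullet> v - g (z + \<xi> *\<^sub>R v) \<bullet> v)"
    using MVT2[OF s(1) der] by blast
  define a1 where "a1 = s *\<^sub>R w + \<xi> *\<^sub>R v"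
  define a2 where "a2 = \<xi> *\<^sub>R v"
  have n1: "norm a1 \<le> s * norm w + \<xi> * norm v"
  proof -
    have "norm a1 \<le> norm (s *\<^sub>R w) + norm (\<xi> *\<^sub>R v)" unfolding a1_def by (rule norm_triangle_ineq)
    then show ?thesis using s xi by simp
  qed
  have n2: "norm a2 = \<xi> * norm v" unfolding a2_def using xi by simp
  have "\<xi> * norm v \<le> s * norm v" using xi by (simp add: mult_right_mono)
  then have n1': "norm a1 \<le> s * norm w + s * norm v" and n2': "norm a2 \<le> s * norm v" using n1 n2 by auto
  have "s * norm v \<le> s * (norm v + norm w)" using s by (simp add: mult_left_mono)
  have nn: "0 \<le> s * norm w" using s by simp
  have ee: "s * (norm v + norm w) = s * norm v + s * norm w" by (simp add: distrib_left)
  have lt1: "norm a1 < \<delta>" and lt2: "norm a2 < \<delta>" using n1' n2' s(2) nn ee by linarith+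
  define R1 where "R1 = g (z + a1) - g z - H a1"
  define R2 where "R2 = g (z + a2) - g z - H a2"
  have hd: "H a1 - H a2 = s *\<^sub>R H w"
    unfolding a1_def a2_def using lin by (simp add: linear_add linear_scale)
  have gdiff: "g (z + a1) - g (z + a2) = s *\<^sub>R H w + (R1 - R2)"
    unfolding R1_def R2_def using hd by (simp add: algebra_simps)
  have Rb: "norm (R1 - R2) \<le> \<epsilon> * (s * norm w + s * norm v) + \<epsilon> * (s * norm v)"
  proof -
    have "norm (R1 - R2) \<le> norm R1 + norm R2" by (rule norm_triangle_ineq4)
    also have "\<dots> \<le> \<epsilon> * norm a1 + \<epsilon> * norm a2" using R[OF lt1] R[OF lt2] by (simp add: R1_def R2_def)
    also have "\<dots> \<le> \<epsilon> * (s * norm w + s * norm v) + \<epsilon> * (s * norm v)"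
      using n1' n2' ep by (intro add_mono mult_left_mono) auto
    finally show ?thesis .
  qed
  have "z + s *\<^sub>R w + \<xi> *\<^sub>R v = z + a1" unfolding a1_def by (simp add: algebra_simps)
  moreover have "z + \<xi> *\<^sub>R v = z + a2" by (simp add: a2_def)
  ultimately have "\<psi> s - \<psi> 0 = s * ((g (z + a1) - g (z + a2)) \<bullet> v)"
    using eq by (simp only: inner_diff_left) simp
  also have "\<dots> = s\<^sup>2 * (H w \<bullet> v) + s * ((R1 - R2) \<bullet> v)"
  proof -
    have "(g (z + a1) - g (z + a2)) \<bullet> v = s * (H w \<bullet> v) + (R1 - R2) \<bullet> v"
      by (simp only: gdiff inner_add_left inner_scaleR_left)
    then show ?thesis by (simp add: power2_eq_square distrib_left)
  qed
  finally have e2: "\<psi> s - \<psi> 0 - s\<^sup>2 * (H w \<bullet> v) = s * ((R1 - R2) \<bullet> v)" by linarith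
  have cs: "\<bar>(R1 - R2) \<bullet> v\<bar> \<le> norm (R1 - R2) * norm v" by (rule Cauchy_Schwarz_ineq2)
  have "\<bar>s * ((R1 - R2) \<bullet> v)\<bar> = s * \<bar>(R1 - R2) \<bullet> v\<bar>" using s by (simp add: abs_mult)
  also have "\<dots> \<le> s * (norm (R1 - R2) * norm v)" using cs s by (intro mult_left_mono) auto
  also have "\<dots> \<le> s * ((\<epsilon> * (s * norm w + s * norm v) + \<epsilon> * (s * norm v)) * norm v)"
    using Rb s by (intro mult_left_mono mult_right_mono) auto
  also have "\<dots> = \<epsilon> * s\<^sup>2 * ((2 * norm v + norm w) * norm v)"
    by (simp add: power2_eq_square algebra_simps)
  finally have c: "\<bar>s * ((R1 - R2) \<bullet> v)\<bar> \<le> \<epsilon> * s\<^sup>2 * ((2 * norm v + norm w) * norm v)" .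
  have fin: "\<bar>\<psi> s - \<psi> 0 - s\<^sup>2 * (H w \<bullet> v)\<bar> \<le> \<epsilon> * s\<^sup>2 * ((2 * norm v + norm w) * norm v)"
    unfolding e2 by (rule c)
  have pe: "\<psi> s - \<psi> 0 = f (z + s *\<^sub>R v + s *\<^sub>R w) - f (z + s *\<^sub>R v) - f (z + s *\<^sub>R w) + f z"
  proof -
    have "z + s *\<^sub>R w + s *\<^sub>R v = z + s *\<^sub>R v + s *\<^sub>R w" by (simp add: algebra_simps)
    then show ?thesis unfolding \<psi>_def by (simp only:) simp
  qed
  show ?thesis using fin unfolding pe .
qed

lemma hess_sym:
  fixes f :: "'a::real_inner \<Rightarrow> real" and g :: "'a \<Rightarrow> 'a" and H :: "'a \<Rightarrow> 'a" and v w :: 'a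
  assumes grad: "\<And>x. (f has_derivative (\<lambda>h. g x \<bullet> h)) (at x)"
    and gd: "(g has_derivative H) (at z)"
  shows "H w \<bullet> v = H v \<bullet> w"
proof (rule ccontr)
  assume ne: "H w \<bullet> v \<noteq> H v \<bullet> w"
  define d where "d = \<bar>H w \<bullet> v - H v \<bullet> w\<bar>"
  have dpos: "d > 0" using ne by (simp add: d_def)
  define C where "C = (2 * norm v + norm w) * norm v + (2 * norm w + norm v) * norm w"
  have C0: "C \<ge> 0" by (simp add: C_def)
  define \<epsilon> where "\<epsilon> = d / (C + 1)"
  have ep: "\<epsilon> > 0" using dpos C0 by (simp add: \<epsilon>_def)
  have lin: "linear H" using gd has_derivative_linear by blast
  from gd[unfolded has_derivative_at_alt] ep obtain \<delta> where dl: "\<delta> > 0"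
    and R0: "\<And>y. norm (y - z) < \<delta> \<Longrightarrow> norm (g y - g z - H (y - z)) \<le> \<epsilon> * norm (y - z)"
    by blast
  have R: "norm (g (z + a) - g z - H a) \<le> \<epsilon> * norm a" if "norm a < \<delta>" for a
    using R0[of "z + a"] that by simp
  define s where "s = \<delta> / (2 * (norm v + norm w + 1))"
  have dd: "2 * (norm v + norm w + 1) > 0" using norm_ge_zero[of v] norm_ge_zero[of w] unfolding distrib_left by linarith
  have s0: "s > 0" using dl dd unfolding s_def by (rule divide_pos_pos)
  have "s * (norm v + norm w) < s * (2 * (norm v + norm w + 1))"
  proof (rule mult_strict_left_mono[OF _ s0])
    show "norm v + norm w < 2 * (norm v + norm w + 1)"
      using norm_ge_zero[of v] norm_ge_zero[of w] unfolding distrib_left by linarith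
  qed
  also have "\<dots> = \<delta>" unfolding s_def using dd by simp
  finally have s1: "s * (norm v + norm w) < \<delta>" .
  then have s2: "s * (norm w + norm v) < \<delta>" by (simp add: add.commute)
  have A: "\<bar>f (z + s *\<^sub>R v + s *\<^sub>R w) - f (z + s *\<^sub>R v) - f (z + s *\<^sub>R w) + f z - s\<^sup>2 * (H w \<bullet> v)\<bar>
          \<le> \<epsilon> * s\<^sup>2 * ((2 * norm v + norm w) * norm v)"
    by (rule sym_aux[OF grad R lin _ s0 s1]) (use ep in auto)
  have B: "\<bar>f (z + s *\<^sub>R w + s *\<^sub>R v) - f (z + s *\<^sub>R w) - f (z + s *\<^sub>R v) + f z - s\<^sup>2 * (H v \<bullet> w)\<bar>
          \<le> \<epsilon> * s\<^sup>2 * ((2 * norm w + norm v) * norm w)"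
    by (rule sym_aux[OF grad R lin _ s0 s2]) (use ep in auto)
  have sw: "z + s *\<^sub>R w + s *\<^sub>R v = z + s *\<^sub>R v + s *\<^sub>R w" by (simp add: algebra_simps)
  have "s\<^sup>2 * d \<le> \<epsilon> * s\<^sup>2 * C"
  proof -
    have tri: "\<And>p q x y a b::real. \<bar>p - x\<bar> \<le> a \<Longrightarrow> \<bar>q - y\<bar> \<le> b \<Longrightarrow> p = q \<Longrightarrow> \<bar>x - y\<bar> \<le> a + b"
      by arith
    have "\<bar>s\<^sup>2 * (H w \<bullet> v) - s\<^sup>2 * (H v \<bullet> w)\<bar> \<le> \<epsilon> * s\<^sup>2 * ((2 * norm v + norm w) * norm v) + \<epsilon> * s\<^sup>2 * ((2 * norm w + norm v) * norm w)"
      by (rule tri[OF A B[unfolded sw]]) simp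
    moreover have "\<bar>s\<^sup>2 * (H w \<bullet> v) - s\<^sup>2 * (H v \<bullet> w)\<bar> = s\<^sup>2 * d"
      unfolding d_def right_diff_distrib[symmetric] abs_mult by simp
    moreover have "\<epsilon> * s\<^sup>2 * ((2 * norm v + norm w) * norm v) + \<epsilon> * s\<^sup>2 * ((2 * norm w + norm v) * norm w) = \<epsilon> * s\<^sup>2 * C"
      unfolding C_def by (simp add: distrib_left)
    ultimately show ?thesis by simp
  qed
  then have "d \<le> \<epsilon> * C" using s0 by (simp add: mult.commute mult.left_commute)
  also have "\<epsilon> * C < d" unfolding \<epsilon>_def using dpos C0 by (simp add: field_simps)
  finally show False by simp
qed

lemma hess_psd:
  fixes f :: "'a::real_inner \<Rightarrow> real" and g :: "'a \<Rightarrow> 'a" and H :: "'a \<Rightarrow> 'a"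
  assumes conv: "convex_on UNIV f"
    and grad: "\<And>x. (f has_derivative (\<lambda>h. g x \<bullet> h)) (at x)"
    and gd: "(g has_derivative H) (at z)"
  shows "H v \<bullet> v \<ge> 0"
proof (rule ccontr)
  assume "\<not> ?thesis"
  then have neg: "v \<bullet> H v < 0" by (simp add: inner_commute)
  have gd': "(g has_derivative H) (at (z + 0 *\<^sub>R v))" using gd by simp
  have der: "((\<lambda>t. v \<bullet> g (z + t *\<^sub>R v)) has_field_derivative v \<bullet> H v) (at 0)"
    by (rule line_gd[OF gd'])
  from DERIV_neg_dec_right[OF der neg] obtain d where d: "d > 0"
    and dd: "\<And>h. h > 0 \<Longrightarrow> h < d \<Longrightarrow> v \<bullet> g (z + 0 *\<^sub>R v) > v \<bullet> g (z + (0 + h) *\<^sub>R v)"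
    by blast
  define h where "h = d / 2"
  have h: "h > 0" "h < d" using d by (auto simp: h_def)
  have t1: "f (z + h *\<^sub>R v) \<ge> f z + g z \<bullet> (z + h *\<^sub>R v - z)" by (rule tangent[OF conv grad])
  have t2: "f z \<ge> f (z + h *\<^sub>R v) + g (z + h *\<^sub>R v) \<bullet> (z - (z + h *\<^sub>R v))" by (rule tangent[OF conv grad])
  have "h * (v \<bullet> g z) \<le> h * (v \<bullet> g (z + h *\<^sub>R v))"
    using t1 t2 by (simp add: inner_commute)
  then have "v \<bullet> g z \<le> v \<bullet> g (z + h *\<^sub>R v)" using h by simp
  with dd[OF h] show False by simp
qed

lemma op_sq:
  fixes H :: "'a::real_inner \<Rightarrow> 'a"
  assumes lin: "linear H"
    and sym: "\<And>v w. H w \<bullet> v = H v \<bullet> w"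
    and up: "\<And>v. H v \<bullet> v \<le> L * (norm v)\<^sup>2"
    and psd: "\<And>v. H v \<bullet> v \<ge> 0"
    and L: "L > 0"
  shows "(norm (H v))\<^sup>2 \<le> L * (H v \<bullet> v)"
proof -
  define u where "u = H v"
  define t where "t = 1 / L"
  have "0 \<le> H (v - t *\<^sub>R u) \<bullet> (v - t *\<^sub>R u)" by (rule psd)
  also have "H (v - t *\<^sub>R u) \<bullet> (v - t *\<^sub>R u) = H v \<bullet> v - 2 * t * (u \<bullet> u) + t\<^sup>2 * (H u \<bullet> u)"
  proof -
    have e1: "H (v - t *\<^sub>R u) = H v - t *\<^sub>R H u" using lin by (simp add: linear_diff linear_scale)
    have e2: "H u \<bullet> v = u \<bullet> u" using sym[of v u] by (simp add: u_def)
    have hv: "H v = u" by (simp add: u_def)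
    show ?thesis unfolding e1 hv
      by (simp add: inner_diff_left inner_diff_right e2 power2_eq_square algebra_simps)
  qed
  also have "\<dots> \<le> H v \<bullet> v - 2 * t * (u \<bullet> u) + t\<^sup>2 * (L * (norm u)\<^sup>2)"
    using up[of u] by (simp add: mult_left_mono)
  also have "\<dots> = H v \<bullet> v - (norm u)\<^sup>2 / L"
    using L by (simp add: t_def power2_eq_square field_simps power2_norm_eq_inner[symmetric])
  finally show ?thesis using L by (simp add: u_def field_simps)
qed

lemma sq_add: fixes a b :: "'a::real_inner"
  shows "(norm (a + b))\<^sup>2 = (norm a)\<^sup>2 + 2 * (a \<bullet> b) + (norm b)\<^sup>2"
  by (simp add: power2_norm_eq_inner inner_add_left inner_add_right inner_commute)

theorem lemmaE3:
  fixes f :: "'a::euclidean_space \<Rightarrow> real"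
    and g :: "'a \<Rightarrow> 'a"
    and H :: "'a \<Rightarrow> 'a \<Rightarrow> 'a"
    and x0 :: 'a and M :: ereal and L lam :: real
  assumes conv: "convex_on UNIV f"
    and grad: "\<And>x. (f has_derivative (\<lambda>h. g x \<bullet> h)) (at x)"
    and M_pos: "M > 0"
    and L_pos: "L > 0"
    and hess: "\<And>x. ereal (dist x0 x) \<le> M \<Longrightarrow>
                 (g has_derivative H x) (at x within {y. ereal (dist x0 y) \<le> M})"
    and hess_bound: "\<And>x v. ereal (dist x0 x) \<le> M \<Longrightarrow> H x v \<bullet> v \<le> L * (norm v)\<^sup>2"
    and lam: "lam > norm (g x0)"
    and x: "ereal (dist x0 x) \<le> min (ereal ((lam - norm (g x0)) / L)) M"
  shows "f x = (INF y. f y + lam * norm (x - y))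
         \<and> {y. \<forall>z. f y + lam * norm (x - y) \<le> f z + lam * norm (x - z)} = {x}"
proof -
  define S where "S = {y. ereal (dist x0 y) \<le> M}"
  define U where "U = {y. ereal (dist x0 y) < M}"
  have openU: "open U" unfolding U_def
    by (intro open_Collect_less continuous_on_ereal continuous_intros)
  have US: "U \<subseteq> S" by (auto simp: U_def S_def)
  have Hat: "(g has_derivative H z) (at z)" if "z \<in> U" for z
  proof -
    have "(g has_derivative H z) (at z within S)" using hess[of z] that US by (auto simp: S_def)
    then have "(g has_derivative H z) (at z within U)" using US by (rule has_derivative_subset)
    then show ?thesis using at_within_open[OF that openU] by simp
  qed
  have lin: "linear (H z)" if "z \<in> U" for z using Hat[OF that] has_derivative_linear by blast
  have psd: "H z v \<bullet> v \<ge> 0" if "z \<in> U" for z v by (rule hess_psd[OF conv grad Hat[OF that]])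
  have sym: "H z w \<bullet> v = H z v \<bullet> w" if "z \<in> U" for z v w by (rule hess_sym[OF grad Hat[OF that]])
  have up: "H z v \<bullet> v \<le> L * (norm v)\<^sup>2" if "z \<in> U" for z v
    using hess_bound[of z v] that by (simp add: U_def)
  have sq: "(norm (H z v))\<^sup>2 \<le> L * (H z v \<bullet> v)" if "z \<in> U" for z v
    by (rule op_sq[OF lin[OF that] sym[OF that] up[OF that] psd[OF that] L_pos])
  have nb: "norm (H z v) \<le> L * norm v" if "z \<in> U" for z v
  proof -
    have "(norm (H z v))\<^sup>2 \<le> L * (H z v \<bullet> v)" by (rule sq[OF that])
    also have "\<dots> \<le> L * (norm (H z v) * norm v)"
      using L_pos by (intro mult_left_mono) (auto simp: Cauchy_Schwarz_ineq2[THEN abs_le_D1])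
    finally have "norm (H z v) * norm (H z v) \<le> (L * norm v) * norm (H z v)"
      by (simp add: power2_eq_square algebra_simps)
    then show ?thesis
      using L_pos by (cases "norm (H z v) = 0") (auto simp: mult_le_cancel_right)
  qed
  have segU: "x0 + t *\<^sub>R (z - x0) \<in> U" if z: "ereal (norm (z - x0)) \<le> M" and t: "0 \<le> t" "t < 1" for z t
  proof -
    have dz: "dist x0 (x0 + t *\<^sub>R (z - x0)) = t * norm (z - x0)"
      using t by (simp add: dist_norm)
    show ?thesis
    proof (cases "norm (z - x0) = 0")
      case True then show ?thesis using M_pos by (simp add: U_def dz zero_ereal_def[symmetric])
    next
      case False
      then have "t * norm (z - x0) < norm (z - x0)" using t by simp
      then have "ereal (t * norm (z - x0)) < ereal (norm (z - x0))" by simp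
      then have "ereal (t * norm (z - x0)) < M" using z by (rule less_le_trans)
      then show ?thesis by (simp add: U_def dz)
    qed
  qed
  have segS: "x0 + t *\<^sub>R (z - x0) \<in> S" if z: "ereal (norm (z - x0)) \<le> M" and t: "0 \<le> t" "t \<le> 1" for z t
  proof -
    have dz: "dist x0 (x0 + t *\<^sub>R (z - x0)) = t * norm (z - x0)"
      using t by (simp add: dist_norm)
    have "t * norm (z - x0) \<le> norm (z - x0)" using t by (simp add: mult_left_le_one_le)
    then have "ereal (t * norm (z - x0)) \<le> ereal (norm (z - x0))" by simp
    then have "ereal (t * norm (z - x0)) \<le> M" using z by (rule order_trans)
    then show ?thesis by (simp add: S_def dz)
  qed
  have contS: "continuous_on S g"
    by (rule has_derivative_continuous_on[of S g H]) (use hess in \<open>auto simp: S_def\<close>)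
  have phic: "continuous_on {0..1} (\<lambda>t. e \<bullet> g (x0 + t *\<^sub>R (z - x0)))"
    if z: "ereal (norm (z - x0)) \<le> M" for z e
  proof -
    have "continuous_on {0..1} (\<lambda>t. x0 + t *\<^sub>R (z - x0))" by (intro continuous_intros)
    moreover have "(\<lambda>t. x0 + t *\<^sub>R (z - x0)) ` {0..1} \<subseteq> S" using segS[OF z] by auto
    ultimately have "continuous_on {0..1} (\<lambda>t. g (x0 + t *\<^sub>R (z - x0)))"
      using continuous_on_compose2[OF contS] by blast
    then show ?thesis by (intro continuous_intros)
  qed
  have phid: "((\<lambda>t. e \<bullet> g (x0 + t *\<^sub>R d)) has_field_derivative e \<bullet> H (x0 + t *\<^sub>R d) d) (at t)"
    if "x0 + t *\<^sub>R d \<in> U" for d e t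
    by (rule line_gd[OF Hat[OF that]])
  have mvt: "\<exists>\<xi>. a < \<xi> \<and> \<xi> < b \<and> e \<bullet> g (x0 + b *\<^sub>R (z - x0)) - e \<bullet> g (x0 + a *\<^sub>R (z - x0))
               = (b - a) * (e \<bullet> H (x0 + \<xi> *\<^sub>R (z - x0)) (z - x0))"
    if z: "ereal (norm (z - x0)) \<le> M" and ab: "0 \<le> a" "a < b" "b \<le> 1" for z e a b
  proof -
    have c: "continuous_on {a..b} (\<lambda>t. e \<bullet> g (x0 + t *\<^sub>R (z - x0)))"
      using phic[OF z] by (rule continuous_on_subset) (use ab in auto)
    have dif: "(\<lambda>t. e \<bullet> g (x0 + t *\<^sub>R (z - x0))) differentiable (at t)" if "a < t" "t < b" for t
    proof -
      have "0 \<le> t" "t < 1" using that ab by auto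
      from phid[OF segU[OF z this]] show ?thesis unfolding real_differentiable_def by blast
    qed
    obtain l \<xi> where xi: "a < \<xi>" "\<xi> < b" and dl: "DERIV (\<lambda>t. e \<bullet> g (x0 + t *\<^sub>R (z - x0))) \<xi> :> l"
      and eq: "e \<bullet> g (x0 + b *\<^sub>R (z - x0)) - e \<bullet> g (x0 + a *\<^sub>R (z - x0)) = (b - a) * l"
      using MVT[OF ab(2) c dif] by blast
    have "l = e \<bullet> H (x0 + \<xi> *\<^sub>R (z - x0)) (z - x0)"
      using DERIV_unique[OF dl phid[OF segU[OF z]]] xi ab by auto
    then show ?thesis using xi eq by blast
  qed
  have lip: "norm (g z - g x0) \<le> L * norm (z - x0)" if z: "ereal (norm (z - x0)) \<le> M" for z
  proof -
    define D where "D = g z - g x0"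
    obtain \<xi> where xi: "0 < \<xi>" "\<xi> < 1"
      and eq: "D \<bullet> g (x0 + 1 *\<^sub>R (z - x0)) - D \<bullet> g (x0 + 0 *\<^sub>R (z - x0))
               = (1 - 0) * (D \<bullet> H (x0 + \<xi> *\<^sub>R (z - x0)) (z - x0))"
      using mvt[OF z, of 0 1 D] by auto
    have "D \<bullet> D = D \<bullet> H (x0 + \<xi> *\<^sub>R (z - x0)) (z - x0)"
      using eq by (simp add: D_def inner_diff_right)
    also have "\<dots> \<le> norm D * norm (H (x0 + \<xi> *\<^sub>R (z - x0)) (z - x0))"
      by (rule Cauchy_Schwarz_ineq2[THEN abs_le_D1])
    also have "\<dots> \<le> norm D * (L * norm (z - x0))"
      using nb[OF segU[OF z]] xi by (intro mult_left_mono) auto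
    finally have "norm D * norm D \<le> (L * norm (z - x0)) * norm D"
      by (simp add: power2_norm_eq_inner[symmetric] power2_eq_square algebra_simps)
    then show ?thesis unfolding D_def[symmetric]
      using L_pos by (cases "norm D = 0") (auto simp: mult_le_cancel_right less_imp_le)
  qed
  have strict: "(g z - g x0) \<bullet> (z - x0) > 0"
    if z: "ereal (norm (z - x0)) \<le> M" and eqn: "norm (g z - g x0) = L * norm (z - x0)"
      and pos: "norm (z - x0) > 0" for z
  proof (rule ccontr)
    define d where "d = z - x0"
    define D where "D = g z - g x0"
    assume "\<not> ?thesis"
    then have Dd: "D \<bullet> d \<le> 0" by (simp add: D_def d_def)
    define \<psi> where "\<psi> t = d \<bullet> g (x0 + t *\<^sub>R d)" for t
    have \<psi>1: "\<psi> 1 - \<psi> 0 = D \<bullet> d" by (simp add: \<psi>_def D_def d_def inner_diff_right inner_commute)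
    have hdd: "d \<bullet> H (x0 + t *\<^sub>R d) d \<ge> 0" if "0 \<le> t" "t < 1" for t
      using psd[OF segU[OF z that, folded d_def], of d] by (simp add: inner_commute)
    have const: "\<psi> t = \<psi> 0" if t: "0 < t" "t < 1" for t
    proof -
      obtain \<xi>1 where x1: "0 < \<xi>1" "\<xi>1 < t"
        and e1: "\<psi> t - \<psi> 0 = (t - 0) * (d \<bullet> H (x0 + \<xi>1 *\<^sub>R d) d)"
        using mvt[OF z, of 0 t d] t unfolding d_def[symmetric] \<psi>_def by auto
      obtain \<xi>2 where x2: "t < \<xi>2" "\<xi>2 < 1"
        and e2: "\<psi> 1 - \<psi> t = (1 - t) * (d \<bullet> H (x0 + \<xi>2 *\<^sub>R d) d)"
        using mvt[OF z, of t 1 d] t unfolding d_def[symmetric] \<psi>_def by auto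
      have "\<psi> t - \<psi> 0 \<ge> 0" unfolding e1 using t x1 hdd[of \<xi>1] by simp
      moreover have "\<psi> 1 - \<psi> t \<ge> 0" unfolding e2 using t x2 hdd[of \<xi>2] by simp
      ultimately show ?thesis using \<psi>1 Dd by linarith
    qed
    have Hz: "H (x0 + t *\<^sub>R d) d = 0" if t: "0 < t" "t < 1" for t
    proof -
      have inU: "x0 + t *\<^sub>R d \<in> U" using segU[OF z, of t] t by (simp add: d_def)
      have der: "(\<psi> has_field_derivative d \<bullet> H (x0 + t *\<^sub>R d) d) (at t)"
        unfolding \<psi>_def by (rule phid[OF inU])
      have "d \<bullet> H (x0 + t *\<^sub>R d) d = 0"
      proof (rule DERIV_local_const[OF der, of "min t (1 - t)"])
        show "0 < min t (1 - t)" using t by simp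
        show "\<forall>y. \<bar>t - y\<bar> < min t (1 - t) \<longrightarrow> \<psi> t = \<psi> y"
        proof (intro allI impI)
          fix y assume "\<bar>t - y\<bar> < min t (1 - t)"
          then have "0 < y" "y < 1" by auto
          then show "\<psi> t = \<psi> y" using const[OF t] const[of y] by simp
        qed
      qed
      then have "(norm (H (x0 + t *\<^sub>R d) d))\<^sup>2 \<le> 0"
        using sq[OF inU, of d] by (simp add: inner_commute)
      then show ?thesis by simp
    qed
    obtain \<xi> where xi: "0 < \<xi>" "\<xi> < 1"
      and e: "D \<bullet> g (x0 + 1 *\<^sub>R (z - x0)) - D \<bullet> g (x0 + 0 *\<^sub>R (z - x0))
               = (1 - 0) * (D \<bullet> H (x0 + \<xi> *\<^sub>R (z - x0)) (z - x0))"
      using mvt[OF z, of 0 1 D] by auto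
    have "D \<bullet> D = 0" using e Hz[OF xi] by (simp add: d_def D_def inner_diff_right)
    then have "D = 0" by simp
    then show False using eqn pos L_pos by (simp add: D_def)
  qed
  define r where "r = norm (x - x0)"
  define r0 where "r0 = (lam - norm (g x0)) / L"
  have dx: "dist x0 x = r" by (simp add: r_def dist_norm norm_minus_commute)
  have dx2: "norm (x - x0) = dist x0 x" by (simp add: dist_norm norm_minus_commute)
  have xM: "ereal (norm (x - x0)) \<le> M" using x unfolding dx2 by simp
  have "ereal r \<le> ereal r0" using x by (simp add: dx r0_def)
  then have rr0: "r \<le> r0" by simp
  have Lr0: "L * r0 = lam - norm (g x0)" using L_pos by (simp add: r0_def)
  have r0pos: "r0 > 0" using lam L_pos by (simp add: r0_def)
  have tri: "norm (g z) \<le> norm (g x0) + norm (g z - g x0)" for z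
    using norm_triangle_ineq2[of "g z" "g x0"] by simp
  have gxb: "norm (g x) \<le> lam"
  proof -
    have "norm (g x) \<le> norm (g x0) + L * r" using tri[of x] lip[OF xM] by (simp add: r_def)
    also have "\<dots> \<le> norm (g x0) + L * r0" using rr0 L_pos by simp
    finally show ?thesis using Lr0 by simp
  qed
  have key: "f x \<le> f y + lam * norm (x - y)" for y
  proof -
    have "f y \<ge> f x + g x \<bullet> (y - x)" by (rule tangent[OF conv grad])
    moreover have "g x \<bullet> (y - x) \<ge> - (norm (g x) * norm (y - x))"
      using Cauchy_Schwarz_ineq2[of "g x" "y - x"] by linarith
    moreover have "norm (g x) * norm (y - x) \<le> lam * norm (y - x)"
      using gxb by (simp add: mult_right_mono)
    ultimately show ?thesis by (simp add: norm_minus_commute)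
  qed
  have part1: "f x = (INF y. f y + lam * norm (x - y))"
  proof -
    have "(INF y. f y + lam * norm (x - y)) = f x + lam * norm (x - x)"
    proof (rule cInf_eq_minimum)
      show "f x + lam * norm (x - x) \<in> range (\<lambda>y. f y + lam * norm (x - y))" by (rule rangeI)
    qed (auto intro: key)
    then show ?thesis by simp
  qed
  have uniq: "y = x" if yin: "\<forall>z. f y + lam * norm (x - y) \<le> f z + lam * norm (x - z)" for y
  proof (rule ccontr)
    assume ne: "y \<noteq> x"
    have hy: "f y + lam * norm (x - y) \<le> f x" using yin[rule_format, of x] by simp
    define u where "u = y - x"
    define nu where "nu = norm u"
    have nu: "nu > 0" using ne by (simp add: nu_def u_def)
    have nxy: "norm (x - y) = nu" by (simp add: nu_def u_def norm_minus_commute)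
    have t1: "f y \<ge> f x + g x \<bullet> u" unfolding u_def by (rule tangent[OF conv grad])
    have c1: "g x \<bullet> u \<le> - lam * nu" using hy t1 nxy by simp
    have c2: "- (norm (g x) * nu) \<le> g x \<bullet> u"
      using Cauchy_Schwarz_ineq2[of "g x" u] unfolding nu_def by linarith
    have "lam * nu \<le> norm (g x) * nu" using c1 c2 by simp
    then have "lam \<le> norm (g x)" using nu by simp
    then have ngx: "norm (g x) = lam" using gxb by simp
    define d where "d = x - x0"
    define D where "D = g x - g x0"
    have lipx: "norm D \<le> L * r" using lip[OF xM] by (simp add: D_def r_def)
    have "lam \<le> norm (g x0) + norm D" using tri[of x] ngx by (simp add: D_def)
    also have "\<dots> \<le> norm (g x0) + L * r" using lipx by simp
    also have "\<dots> \<le> norm (g x0) + L * r0" using rr0 L_pos by simp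
    finally have "L * r = L * r0" "norm D = L * r" "norm (g x) = norm (g x0) + norm D"
      using Lr0 lipx ngx \<open>lam \<le> norm (g x0) + norm D\<close> \<open>norm (g x0) + norm D \<le> norm (g x0) + L * r\<close>
        \<open>norm (g x0) + L * r \<le> norm (g x0) + L * r0\<close> by linarith+
    then have rpos: "r > 0" and nD: "norm D = L * r" and ngsum: "norm (g x) = norm (g x0) + norm D"
      using L_pos r0pos by auto
    have nDpos: "norm D > 0" using nD rpos L_pos by simp
    have Dd: "D \<bullet> d > 0"
      using strict[OF xM] nD rpos by (simp add: D_def d_def r_def)
    have gxe: "g x = g x0 + D" by (simp add: D_def)
    have "(norm (g x))\<^sup>2 = (norm (g x0))\<^sup>2 + 2 * (g x0 \<bullet> D) + (norm D)\<^sup>2"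
      unfolding gxe power2_norm_eq_inner by (simp add: inner_add_left inner_add_right inner_commute)
    moreover have "(norm (g x))\<^sup>2 = (norm (g x0))\<^sup>2 + 2 * (norm (g x0) * norm D) + (norm D)\<^sup>2"
      unfolding ngsum by (simp add: power2_eq_square algebra_simps)
    ultimately have "g x0 \<bullet> D = norm (g x0) * norm D" by simp
    then have par: "norm (g x0) *\<^sub>R D = norm D *\<^sub>R g x0" by (simp add: norm_cauchy_schwarz_eq)
    have "norm D * (g x0 \<bullet> d) = norm (g x0) * (D \<bullet> d)"
      using arg_cong[OF par, of "\<lambda>w. w \<bullet> d"] by simp
    moreover have "norm (g x0) * (D \<bullet> d) \<ge> 0" using Dd by simp
    ultimately have "norm D * (g x0 \<bullet> d) \<ge> 0" by simp
    then have g0d: "g x0 \<bullet> d \<ge> 0" using nDpos by (simp add: zero_le_mult_iff)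
    have gxd: "g x \<bullet> d > 0" using g0d Dd by (simp add: gxe inner_add_left)
    define c where "c = nu / lam"
    have lampos: "lam > 0" using lam norm_ge_zero[of "g x0"] by linarith
    have cpos: "c > 0" using nu lampos by (simp add: c_def)
    have "(norm (u + c *\<^sub>R g x))\<^sup>2 = nu\<^sup>2 + 2 * c * (g x \<bullet> u) + c\<^sup>2 * lam\<^sup>2"
      unfolding sq_add by (simp add: nu_def ngx power_mult_distrib inner_commute)
    also have "\<dots> \<le> nu\<^sup>2 + 2 * c * (- lam * nu) + c\<^sup>2 * lam\<^sup>2"
      using mult_left_mono[OF c1, of "2 * c"] cpos by simp
    also have "\<dots> = 0" using lampos by (simp add: c_def power2_eq_square field_simps)
    finally have "u + c *\<^sub>R g x = 0" by simp
    then have ueq: "u = - (c *\<^sub>R g x)" by (simp add: add_eq_0_iff)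
    have ud: "u \<bullet> d < 0" using cpos gxd by (simp add: ueq)
    define s where "s = min (1/2) (- (u \<bullet> d) / nu\<^sup>2)"
    have "nu\<^sup>2 > 0" using nu by simp
    then have "- (u \<bullet> d) / nu\<^sup>2 > 0" using ud by (intro divide_pos_pos) auto
    then have spos: "s > 0" by (simp add: s_def)
    have shalf: "s \<le> 1/2" unfolding s_def by (rule min.cobounded1)
    have snu: "s * nu\<^sup>2 \<le> - (u \<bullet> d)"
    proof -
      have "s \<le> - (u \<bullet> d) / nu\<^sup>2" unfolding s_def by (rule min.cobounded2)
      then show ?thesis using nu by (simp add: field_simps)
    qed
    define p where "p = x + s *\<^sub>R u"
    have pd: "p - x0 = d + s *\<^sub>R u" by (simp add: p_def d_def algebra_simps)
    have "(norm (p - x0))\<^sup>2 = r\<^sup>2 + 2 * s * (u \<bullet> d) + s * (s * nu\<^sup>2)"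
      unfolding pd sq_add by (simp add: r_def d_def nu_def power_mult_distrib inner_commute power2_eq_square)
    also have "\<dots> \<le> r\<^sup>2 + 2 * s * (u \<bullet> d) + s * (- (u \<bullet> d))"
      using snu spos by (intro add_left_mono mult_left_mono) auto
    also have "\<dots> < r\<^sup>2" using spos ud by (simp add: algebra_simps mult_pos_neg)
    finally have "(norm (p - x0))\<^sup>2 < r\<^sup>2" .
    then have pr: "norm (p - x0) < r" using rpos by (simp add: power2_less_imp_less)
    have pM: "ereal (norm (p - x0)) \<le> M"
    proof -
      have "ereal (norm (p - x0)) \<le> ereal r" using pr by simp
      then show ?thesis using xM unfolding r_def by (rule order_trans)
    qed
    have gp: "norm (g p) < lam"
    proof -
      have "norm (g p) \<le> norm (g x0) + L * norm (p - x0)" using tri[of p] lip[OF pM] by simp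
      also have "\<dots> < norm (g x0) + L * r" using pr L_pos by simp
      also have "\<dots> \<le> norm (g x0) + L * r0" using rr0 L_pos by simp
      finally show ?thesis using Lr0 by simp
    qed
    have tp1: "f p \<ge> f x + g x \<bullet> (p - x)" by (rule tangent[OF conv grad])
    have "g x \<bullet> (p - x) = s * (g x \<bullet> u)" by (simp add: p_def)
    moreover have "s * (g x \<bullet> u) \<ge> s * (- (lam * nu))"
      using c2 ngx spos by (intro mult_left_mono) auto
    ultimately have fp: "f p \<ge> f x - s * lam * nu" using tp1 by simp
    have tp2: "f y \<ge> f p + g p \<bullet> (y - p)" by (rule tangent[OF conv grad])
    have "y - p = (1 - s) *\<^sub>R u" by (simp add: p_def u_def algebra_simps)
    then have "(1 - s) * (g p \<bullet> u) \<le> f y - f p" using tp2 by simp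
    also have "\<dots> \<le> (f x - lam * nu) - (f x - s * lam * nu)" using hy nxy fp by simp
    also have "\<dots> = (1 - s) * (- (lam * nu))" by (simp add: algebra_simps)
    finally have "(1 - s) * (g p \<bullet> u) \<le> (1 - s) * (- (lam * nu))" .
    moreover have "1 - s > 0" using shalf by simp
    ultimately have "g p \<bullet> u \<le> - (lam * nu)" by (simp only: mult_le_cancel_left_pos)
    moreover have "- (norm (g p) * nu) \<le> g p \<bullet> u"
      using Cauchy_Schwarz_ineq2[of "g p" u] unfolding nu_def by linarith
    moreover have "norm (g p) * nu < lam * nu" using gp nu by simp
    ultimately show False by linarith
  qed
  have part2: "{y. \<forall>z. f y + lam * norm (x - y) \<le> f z + lam * norm (x - z)} = {x}"
  proof
    show "{y. \<forall>z. f y + lam * norm (x - y) \<le> f z + lam * norm (x - z)} \<subseteq> {x}"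
      using uniq by blast
    show "{x} \<subseteq> {y. \<forall>z. f y + lam * norm (x - y) \<le> f z + lam * norm (x - z)}"
      using key by simp
  qed
  show ?thesis using part1 part2 by blast
qed


end
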